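(* Let $X$ be a linear topological space, $\mathbf{S}$ a countable family of seminorms on $X$ separating points of $X$, and $\tau$ the topology on $X$ generated by $\mathbf{S}$. Let $Y\subseteq X$ be compact in $\tau$, and let $f:Y\to Y$ be a closed mapping with respect to $\tau$ such that $\lim_{n\to\infty}\mathbf{s}(f^n(x)-f^n(y))=0$ for each $\mathbf{s}\in\mathbf{S}$ and each $x,y\in Y$. Then $f$ has a unique fixed point in $Y$.
   Context: The topology generated by a family of seminorms $\mathbf{S}$ has as base the sets $\{z\in X:\mathbf{s}_i(x-z)<\delta,\ i=1,\dots,k\}$ for $x\in X$, finitely many $\mathbf{s}_1,\dots,\mathbf{s}_k\in\mathbf{S}$, and $\delta>0$. A mapping is closed if it maps closed sets to closed sets (continuity is not assumed). $f^n$ denotes the $n$-fold iterate of $f$. *)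

theory Defs
  imports "HOL-Analysis.Analysis"
begin

definition seminorm :: "('a::real_vector \<Rightarrow> real) \<Rightarrow> bool" where
  "seminorm s \<longleftrightarrow> (\<forall>x y. s (x + y) \<le> s x + s y) \<and> (\<forall>c x. s (c *\<^sub>R x) = \<bar>c\<bar> * s x)"

definition seminorm_basic_sets :: "('a::real_vector \<Rightarrow> real) set \<Rightarrow> 'a set set" where
  "seminorm_basic_sets S =
     {{z. \<forall>s\<in>F. s (x - z) < \<delta>} | x F \<delta>. finite F \<and> F \<subseteq> S \<and> \<delta> > 0}"

definition seminorm_topology :: "('a::real_vector \<Rightarrow> real) set \<Rightarrow> 'a topology" where
  "seminorm_topology S = topology_generated_by (seminorm_basic_sets S)"

end

theory Submission
  imports Defs
begin

lemma sn_zero: "seminorm s \<Longrightarrow> s 0 = 0"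
proof -
  assume "seminorm s"
  then have "s (0 *\<^sub>R 0) = \<bar>0\<bar> * s 0" unfolding seminorm_def by blast
  then show ?thesis by simp
qed

lemma sn_neg: "seminorm s \<Longrightarrow> s (- x) = s x"
proof -
  assume "seminorm s"
  then have "s ((-1) *\<^sub>R x) = \<bar>-1\<bar> * s x" unfolding seminorm_def by blast
  then show ?thesis by simp
qed

lemma sn_sym: "seminorm s \<Longrightarrow> s (a - b) = s (b - a)"
  by (metis minus_diff_eq sn_neg)

lemma sn_tri: "seminorm s \<Longrightarrow> s (a - b) \<le> s (a - c) + s (c - b)"
proof -
  assume "seminorm s"
  then have "s ((a - c) + (c - b)) \<le> s (a - c) + s (c - b)" unfolding seminorm_def by blast
  moreover have "(a - c) + (c - b) = a - b" by simp
  ultimately show ?thesis by simp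
qed

lemma sn_nonneg: "seminorm s \<Longrightarrow> 0 \<le> s x"
  using sn_tri[of s x x 0] sn_zero[of s] sn_neg[of s x] by simp

lemma sem_topspace: "topspace (seminorm_topology S) = UNIV"
proof -
  have "UNIV \<in> seminorm_basic_sets S"
    unfolding seminorm_basic_sets_def
    by (rule CollectI, rule exI[of _ 0], rule exI[of _ "{}"], rule exI[of _ 1]) auto
  then show ?thesis unfolding seminorm_topology_def by auto
qed

lemma sem_basic_open:
  "finite F \<Longrightarrow> F \<subseteq> S \<Longrightarrow> \<delta> > 0 \<Longrightarrow> openin (seminorm_topology S) {z. \<forall>s\<in>F. s (x - z) < \<delta>}"
  unfolding seminorm_topology_def openin_topology_generated_by_iff
  by (rule generate_topology_on.Basis) (auto simp: seminorm_basic_sets_def)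

lemma sem_open_ball:
  assumes sn: "\<forall>s\<in>S. seminorm s" and op: "openin (seminorm_topology S) U"
  shows "\<forall>p\<in>U. \<exists>F \<delta>. finite F \<and> F \<subseteq> S \<and> \<delta> > 0 \<and> {z. \<forall>s\<in>F. s (p - z) < \<delta>} \<subseteq> U"
proof -
  have "generate_topology_on (seminorm_basic_sets S) U"
    using op unfolding seminorm_topology_def openin_topology_generated_by_iff .
  then show ?thesis
  proof (induction rule: generate_topology_on.induct)
    case Empty
    then show ?case by simp
  next
    case (Int a b)
    show ?case
    proof
      fix p assume pab: "p \<in> a \<inter> b"
      obtain F1 d1 where 1: "finite F1 \<and> F1 \<subseteq> S \<and> d1 > 0 \<and> {z. \<forall>s\<in>F1. s (p - z) < d1} \<subseteq> a"
        using bspec[OF Int.IH(1), of p] pab by blast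
      obtain F2 d2 where 2: "finite F2 \<and> F2 \<subseteq> S \<and> d2 > 0 \<and> {z. \<forall>s\<in>F2. s (p - z) < d2} \<subseteq> b"
        using bspec[OF Int.IH(2), of p] pab by blast
      show "\<exists>F \<delta>. finite F \<and> F \<subseteq> S \<and> \<delta> > 0 \<and> {z. \<forall>s\<in>F. s (p - z) < \<delta>} \<subseteq> a \<inter> b"
      proof (intro exI conjI)
        show "{z. \<forall>s\<in>F1 \<union> F2. s (p - z) < min d1 d2} \<subseteq> a \<inter> b"
          using 1 2 by auto
      qed (use 1 2 in auto)
    qed
  next
    case (UN K)
    show ?case
    proof
      fix p assume "p \<in> \<Union>K"
      then obtain k where k: "k \<in> K" "p \<in> k" by blast
      have "\<forall>p\<in>k. \<exists>F \<delta>. finite F \<and> F \<subseteq> S \<and> \<delta> > 0 \<and> {z. \<forall>s\<in>F. s (p - z) < \<delta>} \<subseteq> k"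
        by (rule UN.IH[OF k(1)])
      from bspec[OF this k(2)] obtain F \<delta> where F: "finite F \<and> F \<subseteq> S \<and> \<delta> > 0 \<and> {z. \<forall>s\<in>F. s (p - z) < \<delta>} \<subseteq> k"
        by (elim exE)
      have "k \<subseteq> \<Union>K" using k(1) by (rule Union_upper)
      then have "finite F \<and> F \<subseteq> S \<and> \<delta> > 0 \<and> {z. \<forall>s\<in>F. s (p - z) < \<delta>} \<subseteq> \<Union>K"
        using F by (meson order_trans)
      then show "\<exists>F \<delta>. finite F \<and> F \<subseteq> S \<and> \<delta> > 0 \<and> {z. \<forall>s\<in>F. s (p - z) < \<delta>} \<subseteq> \<Union>K"
        by blast
    qed
  next
    case (Basis s0)
    show ?case
    proof
      fix p assume p: "p \<in> s0"
      obtain x F \<delta> where s0: "s0 = {z. \<forall>s\<in>F. s (x - z) < \<delta>}" and F: "finite F" "F \<subseteq> S" "\<delta> > 0"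
        using Basis unfolding seminorm_basic_sets_def by blast
      define m where "m = Max (insert 0 ((\<lambda>s. s (x - p)) ` F))"
      have mle: "\<And>s. s \<in> F \<Longrightarrow> s (x - p) \<le> m" unfolding m_def using F by auto
      have "m < \<delta>" unfolding m_def using F p s0 by auto
      show "\<exists>F \<delta>. finite F \<and> F \<subseteq> S \<and> \<delta> > 0 \<and> {z. \<forall>s\<in>F. s (p - z) < \<delta>} \<subseteq> s0"
      proof (intro exI conjI)
        show "{z. \<forall>s\<in>F. s (p - z) < \<delta> - m} \<subseteq> s0"
        proof
          fix z assume z: "z \<in> {z. \<forall>s\<in>F. s (p - z) < \<delta> - m}"
          { fix s assume "s \<in> F"
            then have "s (x - z) \<le> s (x - p) + s (p - z)" "s (x - p) \<le> m" "s (p - z) < \<delta> - m"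
              using sn_tri[of s x z p] sn F z mle by auto
            then have "s (x - z) < \<delta>" by linarith }
          then show "z \<in> s0" using s0 by auto
        qed
      qed (use F \<open>m < \<delta>\<close> in auto)
    qed
  qed
qed

lemma sem_limitin:
  assumes sn: "\<forall>s\<in>S. seminorm s" and c: "\<forall>s\<in>S. (\<lambda>k. s (p - z k)) \<longlonglongrightarrow> 0"
  shows "limitin (seminorm_topology S) z p sequentially"
  unfolding limitin_def
proof (intro conjI allI impI)
  show "p \<in> topspace (seminorm_topology S)" by (simp add: sem_topspace)
  fix U assume U: "openin (seminorm_topology S) U \<and> p \<in> U"
  from bspec[OF sem_open_ball[OF sn conjunct1[OF U]] conjunct2[OF U]]
  obtain F \<delta> where F: "finite F \<and> F \<subseteq> S \<and> \<delta> > 0 \<and> {z. \<forall>s\<in>F. s (p - z) < \<delta>} \<subseteq> U"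
    by (elim exE)
  have "\<forall>s\<in>F. eventually (\<lambda>k. s (p - z k) < \<delta>) sequentially"
  proof
    fix s assume "s \<in> F"
    then have "s \<in> S" using F by auto
    then have "(\<lambda>k. s (p - z k)) \<longlonglongrightarrow> 0" using c by auto
    then show "eventually (\<lambda>k. s (p - z k) < \<delta>) sequentially"
      using F by (intro order_tendstoD(2)) auto
  qed
  then have "eventually (\<lambda>k. \<forall>s\<in>F. s (p - z k) < \<delta>) sequentially"
    using F by (intro eventually_ball_finite) auto
  then show "eventually (\<lambda>k. z k \<in> U) sequentially"
    by (rule eventually_mono) (use F in auto)
qed

lemma sem_hausdorff:
  assumes sn: "\<forall>s\<in>S. seminorm s" and sep: "\<forall>x y. x \<noteq> y \<longrightarrow> (\<exists>s\<in>S. s (x - y) \<noteq> 0)"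
  shows "Hausdorff_space (seminorm_topology S)"
  unfolding Hausdorff_space_def
proof (intro allI impI)
  fix x y :: 'a assume "x \<in> topspace (seminorm_topology S) \<and> y \<in> topspace (seminorm_topology S) \<and> x \<noteq> y"
  then obtain s where s: "s \<in> S" "s (x - y) \<noteq> 0" using sep by blast
  have sns: "seminorm s" using sn s by auto
  define e where "e = s (x - y) / 2"
  have e: "e > 0" using s sn_nonneg[OF sns, of "x - y"] unfolding e_def by auto
  show "\<exists>U V. openin (seminorm_topology S) U \<and> openin (seminorm_topology S) V \<and> x \<in> U \<and> y \<in> V \<and> disjnt U V"
  proof (intro exI conjI)
    show "openin (seminorm_topology S) {z. \<forall>t\<in>{s}. t (x - z) < e}"
      by (rule sem_basic_open) (use s e in auto)
    show "openin (seminorm_topology S) {z. \<forall>t\<in>{s}. t (y - z) < e}"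
      by (rule sem_basic_open) (use s e in auto)
    show "x \<in> {z. \<forall>t\<in>{s}. t (x - z) < e}" using e sn_zero[OF sns] by simp
    show "y \<in> {z. \<forall>t\<in>{s}. t (y - z) < e}" using e sn_zero[OF sns] by simp
    show "disjnt {z. \<forall>t\<in>{s}. t (x - z) < e} {z. \<forall>t\<in>{s}. t (y - z) < e}"
      unfolding disjnt_def
    proof (rule ccontr)
      assume "{z. \<forall>t\<in>{s}. t (x - z) < e} \<inter> {z. \<forall>t\<in>{s}. t (y - z) < e} \<noteq> {}"
      then obtain z where "s (x - z) < e" "s (y - z) < e" by auto
      moreover have "s (x - y) \<le> s (x - z) + s (z - y)" by (rule sn_tri[OF sns])
      moreover have "s (z - y) = s (y - z)" by (rule sn_sym[OF sns])
      ultimately show False unfolding e_def by linarith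
    qed
  qed
qed




lemma cluster_exists:
  fixes y :: "nat \<Rightarrow> 'a::real_vector"
  assumes sn: "\<forall>s\<in>S. seminorm s" and cpt: "compactin (seminorm_topology S) Y" and yY: "\<And>n. y n \<in> Y"
    and Yne: "Y \<noteq> {}"
  shows "\<exists>p\<in>Y. \<forall>F \<delta> N. finite F \<and> F \<subseteq> S \<and> \<delta> > 0 \<longrightarrow> (\<exists>n\<ge>N. \<forall>s\<in>F. s (p - y n) < \<delta>)"
proof (rule ccontr)
  assume "\<not> ?thesis"
  then have "\<forall>p\<in>Y. \<exists>F \<delta> N. finite F \<and> F \<subseteq> S \<and> \<delta> > 0 \<and> (\<forall>n\<ge>N. \<not> (\<forall>s\<in>F. s (p - y n) < \<delta>))"
    by (simp add: not_less)
  then have "\<forall>p. \<exists>F \<delta> N. p \<in> Y \<longrightarrow> finite F \<and> F \<subseteq> S \<and> \<delta> > 0 \<and> (\<forall>n\<ge>N. \<not> (\<forall>s\<in>F. s (p - y n) < \<delta>))"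
    by simp
  then obtain FF dd NN where H: "\<And>p. p \<in> Y \<Longrightarrow> finite (FF p) \<and> FF p \<subseteq> S \<and> dd p > 0 \<and>
      (\<forall>n\<ge>NN p. \<not> (\<forall>s\<in>FF p. s (p - y n) < dd p))"
    by metis
  define B where "B p = {z. \<forall>s\<in>FF p. s (p - z) < dd p}" for p
  have "\<forall>U\<in>B ` Y. openin (seminorm_topology S) U"
  proof
    fix U assume "U \<in> B ` Y"
    then obtain p where p: "p \<in> Y" "U = B p" by auto
    show "openin (seminorm_topology S) U"
      unfolding p B_def using H[OF p(1)] by (intro sem_basic_open) auto
  qed
  moreover have "Y \<subseteq> \<Union> (B ` Y)"
  proof
    fix p assume p: "p \<in> Y"
    have "\<forall>s\<in>FF p. s (p - p) < dd p"
    proof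
      fix s assume "s \<in> FF p"
      then have "seminorm s" using H[OF p] sn by auto
      then show "s (p - p) < dd p" using H[OF p] sn_zero[of s] by simp
    qed
    then have "p \<in> B p" unfolding B_def by simp
    then show "p \<in> \<Union> (B ` Y)" using p by auto
  qed
  ultimately have "\<exists>\<F>. finite \<F> \<and> \<F> \<subseteq> B ` Y \<and> Y \<subseteq> \<Union> \<F>"
    using cpt unfolding compactin_def by blast
  then obtain \<F> where \<F>: "finite \<F>" "\<F> \<subseteq> B ` Y" "Y \<subseteq> \<Union> \<F>"
    by (elim exE conjE)
  obtain Q where Q: "Q \<subseteq> Y" "finite Q" "\<F> = B ` Q"
    using finite_subset_image[OF \<F>(1,2)] by (elim exE conjE)
  define N where "N = Max (insert 0 (NN ` Q))"
  have "y N \<in> \<Union> (B ` Q)" using yY[of N] \<F>(3) Q(3) by auto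
  then obtain q where q: "q \<in> Q" "y N \<in> B q" by auto
  have "NN q \<le> N" unfolding N_def using Q q by auto
  moreover have qY: "q \<in> Y" using Q q by auto
  ultimately have "\<not> (\<forall>s\<in>FF q. s (q - y N) < dd q)" using H[OF qY] by auto
  then show False using q(2) unfolding B_def by auto
qed



lemma subseq_exists:
  fixes y :: "nat \<Rightarrow> 'a::real_vector"
  assumes sn: "\<forall>s\<in>S. seminorm s" and cS: "countable S" and Sne: "S \<noteq> {}"
    and clus: "\<forall>F \<delta> N. finite F \<and> F \<subseteq> S \<and> \<delta> > 0 \<longrightarrow> (\<exists>n\<ge>N. \<forall>s\<in>F. s (p - y n) < \<delta>)"
  shows "\<exists>nk. strict_mono nk \<and> (\<forall>s\<in>S. (\<lambda>k. s (p - y (nk k))) \<longlonglongrightarrow> 0)"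
proof -
  define e where "e = from_nat_into S"
  have eS: "range e = S" unfolding e_def using Sne cS by (simp add: range_from_nat_into)
  define g where "g m k = (SOME n. m \<le> n \<and> (\<forall>i\<le>k. e i (p - y n) < 1 / (real k + 1)))" for m k
  have g: "m \<le> g m k \<and> (\<forall>i\<le>k. e i (p - y (g m k)) < 1 / (real k + 1))" for m k
  proof -
    have fin: "finite (e ` {..k})" by simp
    have sub: "e ` {..k} \<subseteq> S" using eS by auto
    have pos: "(1 / (real k + 1)) > 0" by simp
    have "\<exists>n\<ge>m. \<forall>s\<in>e ` {..k}. s (p - y n) < 1 / (real k + 1)"
      using clus fin sub pos by blast
    then obtain n where "m \<le> n" "\<forall>s\<in>e ` {..k}. s (p - y n) < 1 / (real k + 1)" by blast
    then have "m \<le> n \<and> (\<forall>i\<le>k. e i (p - y n) < 1 / (real k + 1))" by simp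
    then show ?thesis unfolding g_def by (rule someI)
  qed
  define nk where "nk = rec_nat (g 0 0) (\<lambda>k r. g (Suc r) (Suc k))"
  have nk0: "nk 0 = g 0 0" and nkS: "nk (Suc k) = g (Suc (nk k)) (Suc k)" for k
    unfolding nk_def by simp_all
  have nkp: "\<forall>i\<le>k. e i (p - y (nk k)) < 1 / (real k + 1)" for k
  proof (cases k)
    case 0
    then show ?thesis using g[of 0 0] nk0 by simp
  next
    case (Suc j)
    then show ?thesis using g[of "Suc (nk j)" "Suc j"] nkS[of j] by simp
  qed
  have smono: "strict_mono nk"
    unfolding strict_mono_Suc_iff
  proof
    fix k
    show "nk k < nk (Suc k)" using g[of "Suc (nk k)" "Suc k"] nkS[of k] by simp
  qed
  have conv1: "(\<lambda>k. s (p - y (nk k))) \<longlonglongrightarrow> 0" if s: "s \<in> S" for s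
  proof -
    obtain i where i: "s = e i" using eS s by auto
    have sns: "seminorm s" using sn s by auto
    have A: "(\<lambda>k. inverse (real (Suc k))) \<longlonglongrightarrow> 0" by (rule LIMSEQ_inverse_real_of_nat)
    have B: "eventually (\<lambda>k. s (p - y (nk k)) \<le> inverse (real (Suc k))) sequentially"
      unfolding eventually_sequentially
    proof (intro exI allI impI)
      fix k assume "i \<le> k"
      then have "e i (p - y (nk k)) < 1 / (real k + 1)" using nkp[of k] by blast
      moreover have "1 / (real k + 1) = inverse (real (Suc k))" by (simp add: inverse_eq_divide)
      ultimately show "s (p - y (nk k)) \<le> inverse (real (Suc k))" using i by simp
    qed
    have C: "eventually (\<lambda>k. 0 \<le> s (p - y (nk k))) sequentially"
      by (rule always_eventually) (simp add: sn_nonneg[OF sns])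
    show ?thesis by (rule tendsto_sandwich[OF C B tendsto_const A])
  qed
  show ?thesis using smono conv1 by blast
qed


lemma funpow_fix: "f x = x \<Longrightarrow> (f ^^ n) x = x"
  by (induction n) auto

theorem theorem12:
  fixes S :: "('a::real_vector \<Rightarrow> real) set"
    and Y :: "'a set" and f :: "'a \<Rightarrow> 'a"
  assumes "countable S"
    and "\<forall>s\<in>S. seminorm s"
    and "\<forall>x y. x \<noteq> y \<longrightarrow> (\<exists>s\<in>S. s (x - y) \<noteq> 0)"
    and "compactin (seminorm_topology S) Y"
    and "Y \<noteq> {}"
    and "f ` Y \<subseteq> Y"
    and "closed_map (subtopology (seminorm_topology S) Y) (subtopology (seminorm_topology S) Y) f"
    and "\<forall>s\<in>S. \<forall>x\<in>Y. \<forall>y\<in>Y. (\<lambda>n. s ((f ^^ n) x - (f ^^ n) y)) \<longlonglongrightarrow> 0"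
  shows "\<exists>!x. x \<in> Y \<and> f x = x"
proof -
  note cS = assms(1) and sn = assms(2) and sep = assms(3) and cpt = assms(4)
    and fY = assms(6) and cm = assms(7) and asym = assms(8)
  let ?T = "seminorm_topology S"
  have fY': "f u \<in> Y" if "u \<in> Y" for u using fY that by auto
  have uniq: "x = z" if xz: "x \<in> Y" "f x = x" "z \<in> Y" "f z = z" for x z
  proof (rule ccontr)
    assume "x \<noteq> z"
    then obtain s where s: "s \<in> S" "s (x - z) \<noteq> 0" using sep by auto
    have "(\<lambda>n. s ((f ^^ n) x - (f ^^ n) z)) \<longlonglongrightarrow> 0" using asym s(1) xz(1,3) by auto
    then have "(\<lambda>n. s (x - z)) \<longlonglongrightarrow> 0" using funpow_fix[of f x] funpow_fix[of f z] xz by simp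
    then show False using s by (simp add: LIMSEQ_const_iff)
  qed
  obtain x0 where x0: "x0 \<in> Y" using assms(5) by auto
  define y where "y n = (f ^^ n) x0" for n
  have yY: "y n \<in> Y" for n
    unfolding y_def by (induction n) (use x0 fY' in auto)
  have ySuc: "y (Suc n) = f (y n)" for n unfolding y_def by simp
  have ex: "\<exists>x. x \<in> Y \<and> f x = x"
  proof (cases "S = {}")
    case True
    then have "f x0 = x0" using sep by auto
    then show ?thesis using x0 by auto
  next
    case Sne: False
    obtain p where pY: "p \<in> Y" and clus:
      "\<forall>F \<delta> N. finite F \<and> F \<subseteq> S \<and> \<delta> > 0 \<longrightarrow> (\<exists>n\<ge>N. \<forall>s\<in>F. s (p - y n) < \<delta>)"
      using cluster_exists[of S Y y, OF sn cpt yY assms(5)] by (elim bexE)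
    obtain nk where smono: "strict_mono nk" and conv1: "\<forall>s\<in>S. (\<lambda>k. s (p - y (nk k))) \<longlonglongrightarrow> 0"
      using subseq_exists[OF sn cS Sne clus] by (elim exE conjE)
    have conv2: "(\<lambda>k. s (p - y (nk k + 1))) \<longlonglongrightarrow> 0" if s: "s \<in> S" for s
    proof -
      have sns: "seminorm s" using sn s by auto
      have "(\<lambda>n. s ((f ^^ n) x0 - (f ^^ n) (f x0))) \<longlonglongrightarrow> 0" using asym s x0 fY'[OF x0] by auto
      then have "(\<lambda>n. s (y n - y (n + 1))) \<longlonglongrightarrow> 0"
        unfolding y_def by (simp add: funpow_swap1)
      then have "((\<lambda>n. s (y n - y (n + 1))) \<circ> nk) \<longlonglongrightarrow> 0" using smono by (rule LIMSEQ_subseq_LIMSEQ)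
      then have a: "(\<lambda>k. s (p - y (nk k)) + s (y (nk k) - y (nk k + 1))) \<longlonglongrightarrow> 0"
        using tendsto_add[OF bspec[OF conv1 s]] by (simp add: o_def)
      have B: "eventually (\<lambda>k. s (p - y (nk k + 1)) \<le> s (p - y (nk k)) + s (y (nk k) - y (nk k + 1))) sequentially"
        by (rule always_eventually) (simp add: sn_tri[OF sns])
      have C: "eventually (\<lambda>k. 0 \<le> s (p - y (nk k + 1))) sequentially"
        by (rule always_eventually) (simp add: sn_nonneg[OF sns])
      show ?thesis by (rule tendsto_sandwich[OF C B tendsto_const a])
    qed
    have lim1: "limitin ?T (\<lambda>k. y (nk k)) p sequentially"
      by (rule sem_limitin[OF sn conv1])
    have lim2: "limitin ?T (\<lambda>k. y (nk k + 1)) p sequentially"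
      by (rule sem_limitin[OF sn]) (use conv2 in auto)
    have haus: "Hausdorff_space ?T" by (rule sem_hausdorff[OF sn sep])
    have key: "f p = p \<or> (\<exists>k\<ge>K. p = y (nk k + 1))" for K
    proof -
      define \<sigma> where "\<sigma> k = y (nk (k + K))" for k
      define C where "C = insert p (range \<sigma>)"
      have "limitin ?T \<sigma> p sequentially"
        unfolding \<sigma>_def using limitin_sequentially_offset[OF lim1] by simp
      then have "compactin ?T C" unfolding C_def
        by (intro compactin_sequence_with_limit) (auto simp: sem_topspace)
      then have "closedin ?T C" using haus by (intro compactin_imp_closedin)
      moreover have "C \<subseteq> Y" unfolding C_def \<sigma>_def using pY yY by auto
      ultimately have "C = C \<inter> Y \<and> closedin ?T C" by auto
      then have "closedin (subtopology ?T Y) C"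
        unfolding closedin_subtopology by auto
      then have "closedin (subtopology ?T Y) (f ` C)"
        using cm unfolding closed_map_def by auto
      then obtain D where D: "closedin ?T D" "f ` C = D \<inter> Y"
        unfolding closedin_subtopology by auto
      have L: "limitin ?T (\<lambda>k. y (nk (k + K) + 1)) p sequentially"
        using limitin_sequentially_offset[OF lim2, of K] by simp
      have E: "eventually (\<lambda>k. y (nk (k + K) + 1) \<in> D) sequentially"
      proof (rule always_eventually, rule allI)
        fix k
        have "y (nk (k + K) + 1) = f (\<sigma> k)" unfolding \<sigma>_def using ySuc by simp
        then have "y (nk (k + K) + 1) \<in> f ` C" unfolding C_def by auto
        then show "y (nk (k + K) + 1) \<in> D" using D by auto
      qed
      have "p \<in> D" by (rule limitin_closedin[OF L D(1) E]) simp
      then have "p \<in> f ` C" using D pY by auto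
      then obtain c where c: "c \<in> C" "p = f c" by auto
      show ?thesis
      proof (cases "c = p")
        case True then show ?thesis using c by auto
      next
        case False
        then obtain k where "c = \<sigma> k" using c unfolding C_def by auto
        then have "p = y (nk (k + K) + 1)" using c ySuc unfolding \<sigma>_def by simp
        then show ?thesis by (intro disjI2 exI[of _ "k + K"]) auto
      qed
    qed
    show ?thesis
    proof (cases "f p = p")
      case True then show ?thesis using pY by auto
    next
      case False
      then obtain k0 where k0: "p = y (nk k0 + 1)" using key[of 0] by auto
      define a where "a = nk k0 + 1"
      obtain k1 where k1: "k1 \<ge> a" "p = y (nk k1 + 1)" using key[of a] False by auto
      define b where "b = nk k1 + 1"
      have "k1 \<le> nk k1" using seq_suble[OF smono] .
      then have ab: "a < b" using k1 unfolding b_def by simp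
      define c where "c = b - a"
      have c0: "c > 0" using ab unfolding c_def by simp
      have pc: "(f ^^ c) p = p"
      proof -
        have "(f ^^ c) p = (f ^^ c) ((f ^^ a) x0)" using k0 unfolding a_def y_def by simp
        also have "\<dots> = (f ^^ (c + a)) x0" by (simp add: funpow_add)
        also have "c + a = b" using ab unfolding c_def by simp
        finally show ?thesis using k1 unfolding b_def y_def by simp
      qed
      have pjc: "(f ^^ (j * c)) p = p" for j
      proof (induction j)
        case 0 then show ?case by simp
      next
        case (Suc j)
        have "(f ^^ (Suc j * c)) p = (f ^^ c) ((f ^^ (j * c)) p)" by (simp add: funpow_add)
        then show ?case using Suc pc by simp
      qed
      have "p = f p"
      proof (rule ccontr)
        assume "p \<noteq> f p"
        then obtain s where s: "s \<in> S" "s (p - f p) \<noteq> 0" using sep by auto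
        have "(\<lambda>n. s ((f ^^ n) p - (f ^^ n) (f p))) \<longlonglongrightarrow> 0" using asym s(1) pY fY'[OF pY] by auto
        moreover have "strict_mono (\<lambda>j. j * c)" using c0 by (simp add: strict_mono_def)
        ultimately have "((\<lambda>n. s ((f ^^ n) p - (f ^^ n) (f p))) \<circ> (\<lambda>j. j * c)) \<longlonglongrightarrow> 0"
          by (rule LIMSEQ_subseq_LIMSEQ)
        moreover have "((\<lambda>n. s ((f ^^ n) p - (f ^^ n) (f p))) \<circ> (\<lambda>j. j * c)) = (\<lambda>j. s (p - f p))"
          by (rule ext) (simp add: pjc flip: funpow_swap1)
        ultimately show False using s by (simp add: LIMSEQ_const_iff)
      qed
      then show ?thesis using False by simp
    qed
  qed
  show ?thesis using ex uniq by auto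
qed

end
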